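(* Let $\lambda\in\Pi(\mu,\nu,\gamma)$. (1) If $\lambda$ is an extreme point of $\Pi(\mu,\nu,\gamma)$, then it is an extreme point of $\Pi(\lambda^{XY},\gamma)$, of $\Pi(\lambda^{YZ},\mu)$ and of $\Pi(\lambda^{XZ},\nu)$. (2) If $\lambda$ is an extreme point of $\Pi(\lambda^{XY},\gamma)$ and $\lambda^{XY}$ is an extreme point of $\Pi(\mu,\nu)$, then $\lambda$ is an extreme point of $\Pi(\mu,\nu,\gamma)$. (3) Assume $\lambda=(\nu^x\times\gamma^x)\otimes\mu$, where $\lambda^{XY}=\nu^x\otimes\mu$ and $\lambda^{XZ}=\gamma^x\otimes\mu$. (a) If $\lambda$ is an extreme point of $\Pi(\lambda^{XY},\gamma)$, then $\lambda^{XZ}$ is an extreme point of $\Pi(\mu,\gamma)$. (b) If $\lambda$ is an extreme point of both $\Pi(\lambda^{XY},\gamma)$ and $\Pi(\lambda^{XZ},\nu)$, then $\lambda$ is an extreme point of $\Pi(\mu,\nu,\gamma)$.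
   Context: $X,Y,Z$ are complete separable metric spaces with Borel probability measures $\mu,\nu,\gamma$; $\Pi(\mu,\nu,\gamma)$ is the set of Borel probability measures on $X\times Y\times Z$ with those marginals; $\Pi(\mu,\nu)$, $\Pi(\mu,\gamma)$ similarly. $\lambda^{XY},\lambda^{YZ},\lambda^{XZ}$ are the push-forwards of $\lambda$ under the projections onto $X\times Y$, $Y\times Z$, $X\times Z$. $\Pi(\lambda^{XY},\gamma)=\{\rho\in\Pi(\mu,\nu,\gamma):\rho^{XY}=\lambda^{XY}\}$, and analogously $\Pi(\lambda^{YZ},\mu)$, $\Pi(\lambda^{XZ},\nu)$. For a measure $\sigma$ on $A$ and a measurable family $(\eta^a)$ of probability measures on $B$, $(\eta^a\otimes\sigma)(E\times F)=\int_E\eta^a(F)d\sigma(a)$; $\nu^x\times\gamma^x$ is the product measure on $Y\times Z$. *)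

theory Defs
  imports "HOL-Probability.Probability"
begin

definition borel_prob :: "'a::topological_space measure \<Rightarrow> bool" where
  "borel_prob M \<longleftrightarrow> sets M = sets borel \<and> prob_space M"

definition pX :: "'x \<times> 'y \<times> 'z \<Rightarrow> 'x" where "pX w = fst w"
definition pY :: "'x \<times> 'y \<times> 'z \<Rightarrow> 'y" where "pY w = fst (snd w)"
definition pZ :: "'x \<times> 'y \<times> 'z \<Rightarrow> 'z" where "pZ w = snd (snd w)"
definition pXY :: "'x \<times> 'y \<times> 'z \<Rightarrow> 'x \<times> 'y" where "pXY w = (fst w, fst (snd w))"
definition pYZ :: "'x \<times> 'y \<times> 'z \<Rightarrow> 'y \<times> 'z" where "pYZ w = snd w"
definition pXZ :: "'x \<times> 'y \<times> 'z \<Rightarrow> 'x \<times> 'z" where "pXZ w = (fst w, snd (snd w))"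

definition margXY :: "('x::topological_space \<times> 'y::topological_space \<times> 'z::topological_space) measure \<Rightarrow> ('x \<times> 'y) measure"
  where "margXY l = distr l borel pXY"
definition margYZ :: "('x::topological_space \<times> 'y::topological_space \<times> 'z::topological_space) measure \<Rightarrow> ('y \<times> 'z) measure"
  where "margYZ l = distr l borel pYZ"
definition margXZ :: "('x::topological_space \<times> 'y::topological_space \<times> 'z::topological_space) measure \<Rightarrow> ('x \<times> 'z) measure"
  where "margXZ l = distr l borel pXZ"

definition Pi3 :: "'x::topological_space measure \<Rightarrow> 'y::topological_space measure \<Rightarrow> 'z::topological_space measure
    \<Rightarrow> ('x \<times> 'y \<times> 'z) measure set" where
  "Pi3 \<mu> \<nu> \<gamma> = {\<rho>. borel_prob \<rho> \<and> distr \<rho> borel pX = \<mu> \<and> distr \<rho> borel pY = \<nu> \<and> distr \<rho> borel pZ = \<gamma>}"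

definition Pi2 :: "'a::topological_space measure \<Rightarrow> 'b::topological_space measure \<Rightarrow> ('a \<times> 'b) measure set" where
  "Pi2 \<mu> \<nu> = {\<rho>. borel_prob \<rho> \<and> distr \<rho> borel fst = \<mu> \<and> distr \<rho> borel snd = \<nu>}"

text \<open>\<Pi>(\<lambda>^{XY},\<gamma>), \<Pi>(\<lambda>^{YZ},\<mu>), \<Pi>(\<lambda>^{XZ},\<nu>) (as subsets of \<Pi>(\<mu>,\<nu>,\<gamma>)).\<close>
definition Pi_XY :: "'x::topological_space measure \<Rightarrow> 'y::topological_space measure \<Rightarrow> 'z::topological_space measure
    \<Rightarrow> ('x \<times> 'y \<times> 'z) measure \<Rightarrow> ('x \<times> 'y \<times> 'z) measure set" where
  "Pi_XY \<mu> \<nu> \<gamma> l = {\<rho> \<in> Pi3 \<mu> \<nu> \<gamma>. margXY \<rho> = margXY l}"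
definition Pi_YZ :: "'x::topological_space measure \<Rightarrow> 'y::topological_space measure \<Rightarrow> 'z::topological_space measure
    \<Rightarrow> ('x \<times> 'y \<times> 'z) measure \<Rightarrow> ('x \<times> 'y \<times> 'z) measure set" where
  "Pi_YZ \<mu> \<nu> \<gamma> l = {\<rho> \<in> Pi3 \<mu> \<nu> \<gamma>. margYZ \<rho> = margYZ l}"
definition Pi_XZ :: "'x::topological_space measure \<Rightarrow> 'y::topological_space measure \<Rightarrow> 'z::topological_space measure
    \<Rightarrow> ('x \<times> 'y \<times> 'z) measure \<Rightarrow> ('x \<times> 'y \<times> 'z) measure set" where
  "Pi_XZ \<mu> \<nu> \<gamma> l = {\<rho> \<in> Pi3 \<mu> \<nu> \<gamma>. margXZ \<rho> = margXZ l}"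

definition extreme_point :: "'a measure \<Rightarrow> 'a measure set \<Rightarrow> bool" where
  "extreme_point l S \<longleftrightarrow> l \<in> S \<and>
     (\<forall>\<rho>1\<in>S. \<forall>\<rho>2\<in>S. \<forall>t::real. 0 < t \<and> t < 1 \<and>
        (\<forall>A\<in>sets l. measure l A = t * measure \<rho>1 A + (1 - t) * measure \<rho>2 A) \<longrightarrow> \<rho>1 = \<rho>2)"

definition prob_kernel :: "('a::topological_space \<Rightarrow> 'b::topological_space measure) \<Rightarrow> bool" where
  "prob_kernel \<eta> \<longleftrightarrow> \<eta> \<in> borel \<rightarrow>\<^sub>M prob_algebra borel"

text \<open>P = \<eta>^a \<otimes> \<sigma>: P is the Borel measure on A \<times> B with
  P(E \<times> F) = \<integral>_E \<eta>^a(F) d\<sigma>(a) for all Borel E, F.\<close>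
definition is_compound :: "('a::topological_space \<times> 'b::topological_space) measure
    \<Rightarrow> ('a \<Rightarrow> 'b measure) \<Rightarrow> 'a measure \<Rightarrow> bool" where
  "is_compound P \<eta> \<sigma> \<longleftrightarrow> sets P = sets borel \<and>
     (\<forall>E\<in>sets borel. \<forall>F\<in>sets borel.
        emeasure P (E \<times> F) = (\<integral>\<^sup>+ a. indicator E a * emeasure (\<eta> a) F \<partial>\<sigma>))"

end

theory Submission
  imports Defs
begin

lemma meas_proj[measurable]:
  "(pX :: 'x::topological_space \<times> 'y::topological_space \<times> 'z::topological_space \<Rightarrow> _) \<in> borel_measurable borel"
  "(pY :: 'x::topological_space \<times> 'y::topological_space \<times> 'z::topological_space \<Rightarrow> _) \<in> borel_measurable borel"
  "(pZ :: 'x::topological_space \<times> 'y::topological_space \<times> 'z::topological_space \<Rightarrow> _) \<in> borel_measurable borel"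
  "(pXY :: 'x::topological_space \<times> 'y::topological_space \<times> 'z::topological_space \<Rightarrow> _) \<in> borel_measurable borel"
  "(pYZ :: 'x::topological_space \<times> 'y::topological_space \<times> 'z::topological_space \<Rightarrow> _) \<in> borel_measurable borel"
  "(pXZ :: 'x::topological_space \<times> 'y::topological_space \<times> 'z::topological_space \<Rightarrow> _) \<in> borel_measurable borel"
  unfolding pX_def[abs_def] pY_def[abs_def] pZ_def[abs_def] pXY_def[abs_def] pYZ_def[abs_def] pXZ_def[abs_def]
  by (rule borel_measurable_continuous_onI, intro continuous_intros)+

lemma meas_fs:
  "(fst :: 'a::topological_space \<times> 'b::topological_space \<Rightarrow> _) \<in> borel_measurable borel"
  "(snd :: 'a::topological_space \<times> 'b::topological_space \<Rightarrow> _) \<in> borel_measurable borel"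
  by (rule borel_measurable_continuous_onI, intro continuous_intros)+

lemma proj_comp:
  "fst \<circ> pXY = pX" "snd \<circ> pXY = pY" "fst \<circ> pXZ = pX" "snd \<circ> pXZ = pZ"
  "fst \<circ> pYZ = pY" "snd \<circ> pYZ = pZ"
  by (auto simp: pX_def pY_def pZ_def pXY_def pYZ_def pXZ_def)

lemma prob_eqI:
  assumes "prob_space M" "prob_space N" "sets M = sets N"
    "\<And>A. A \<in> sets M \<Longrightarrow> measure M A = measure N A"
  shows "M = N"
proof (rule measure_eqI[OF assms(3)])
  fix A assume "A \<in> sets M"
  then show "emeasure M A = emeasure N A"
  proof -
    interpret M: prob_space M by fact
    interpret N: prob_space N by fact
    show ?thesis using assms \<open>A \<in> sets M\<close> by (simp add: M.emeasure_eq_measure N.emeasure_eq_measure)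
  qed
qed

lemma distr_distr_borel:
  assumes "f \<in> borel_measurable borel" "g \<in> borel_measurable borel" "sets M = sets borel"
  shows "distr (distr M borel f) borel g = distr M borel (g \<circ> f)"
proof -
  have f: "f \<in> M \<rightarrow>\<^sub>M borel" using assms(1) measurable_cong_sets[OF assms(3) refl] by blast
  show ?thesis by (rule distr_distr[OF assms(2) f])
qed

lemma conv_distr:
  assumes H: "\<forall>A\<in>sets l. measure l A = t * measure r1 A + (1 - t) * measure r2 A"
    and s: "sets l = sets borel" "sets r1 = sets borel" "sets r2 = sets borel"
    and f: "f \<in> borel_measurable borel"
  shows "\<forall>A\<in>sets borel. measure (distr l borel f) A
           = t * measure (distr r1 borel f) A + (1 - t) * measure (distr r2 borel f) A"
proof
  fix A :: "'b set" assume A: "A \<in> sets borel"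
  have fl: "f \<in> l \<rightarrow>\<^sub>M borel" using f measurable_cong_sets[OF s(1) refl] by blast
  have f1: "f \<in> r1 \<rightarrow>\<^sub>M borel" using f measurable_cong_sets[OF s(2) refl] by blast
  have f2: "f \<in> r2 \<rightarrow>\<^sub>M borel" using f measurable_cong_sets[OF s(3) refl] by blast
  have sp: "space l = space r1" "space l = space r2"
    using s by (metis sets_eq_imp_space_eq)+
  have m: "f -` A \<inter> space l \<in> sets l" using measurable_sets[OF fl A] .
  have "measure (distr l borel f) A = measure l (f -` A \<inter> space l)"
    by (rule measure_distr[OF fl A])
  also have "\<dots> = t * measure r1 (f -` A \<inter> space r1) + (1 - t) * measure r2 (f -` A \<inter> space r2)"
    using H m sp by metis
  also have "\<dots> = t * measure (distr r1 borel f) A + (1 - t) * measure (distr r2 borel f) A"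
    using measure_distr[OF f1 A] measure_distr[OF f2 A] by simp
  finally show "measure (distr l borel f) A
           = t * measure (distr r1 borel f) A + (1 - t) * measure (distr r2 borel f) A" .
qed

lemma borel_prob_distr:
  assumes "borel_prob M" "f \<in> borel_measurable borel"
  shows "borel_prob (distr M borel f)"
proof -
  have s: "sets M = sets borel" and p: "prob_space M" using assms(1) by (auto simp: borel_prob_def)
  have "f \<in> M \<rightarrow>\<^sub>M borel" using assms(2) measurable_cong_sets[OF s refl] by blast
  then show ?thesis unfolding borel_prob_def using prob_space.prob_space_distr[OF p] by simp
qed

lemma distr_comp_Pi3:
  assumes "borel_prob r" "f \<in> borel_measurable borel" "g \<in> borel_measurable borel"
  shows "distr (distr r borel f) borel g = distr r borel (g \<circ> f)"
  using assms distr_distr_borel unfolding borel_prob_def by blast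

lemma margXY_Pi2:
  assumes "r \<in> Pi3 \<mu> \<nu> \<gamma>"
  shows "margXY r \<in> Pi2 \<mu> \<nu>"
proof -
  have b: "borel_prob r" using assms by (simp add: Pi3_def)
  show ?thesis using assms unfolding Pi3_def Pi2_def margXY_def
    using borel_prob_distr[OF b meas_proj(4)] distr_comp_Pi3[OF b meas_proj(4) meas_fs(1)]
    distr_comp_Pi3[OF b meas_proj(4) meas_fs(2)]
    by (simp only: proj_comp) blast
qed

lemma margXZ_Pi2:
  assumes "r \<in> Pi3 \<mu> \<nu> \<gamma>"
  shows "margXZ r \<in> Pi2 \<mu> \<gamma>"
proof -
  have b: "borel_prob r" using assms by (simp add: Pi3_def)
  show ?thesis using assms unfolding Pi3_def Pi2_def margXZ_def
    using borel_prob_distr[OF b meas_proj(6)] distr_comp_Pi3[OF b meas_proj(6) meas_fs(1)]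
    distr_comp_Pi3[OF b meas_proj(6) meas_fs(2)]
    by (simp only: proj_comp) blast
qed

lemma part1:
  assumes "extreme_point l S" "l \<in> T" "T \<subseteq> S"
  shows "extreme_point l T"
  using assms unfolding extreme_point_def by blast

lemma part2:
  assumes l: "l \<in> Pi3 \<mu> \<nu> \<gamma>" and e1: "extreme_point l (Pi_XY \<mu> \<nu> \<gamma> l)"
    and e2: "extreme_point (margXY l) (Pi2 \<mu> \<nu>)"
  shows "extreme_point l (Pi3 \<mu> \<nu> \<gamma>)"
  unfolding extreme_point_def
proof (intro conjI ballI allI impI)
  show "l \<in> Pi3 \<mu> \<nu> \<gamma>" by fact
  fix r1 r2 t assume r1: "r1 \<in> Pi3 \<mu> \<nu> \<gamma>" and r2: "r2 \<in> Pi3 \<mu> \<nu> \<gamma>"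
    and H: "0 < t \<and> t < 1 \<and> (\<forall>A\<in>sets l. measure l A = t * measure r1 A + (1 - t) * measure r2 A)"
  have bp: "borel_prob l" "borel_prob r1" "borel_prob r2" using l r1 r2 by (auto simp: Pi3_def)
  have s: "sets l = sets borel" "sets r1 = sets borel" "sets r2 = sets borel"
    using bp by (auto simp: borel_prob_def)
  have cm: "\<forall>A\<in>sets borel. measure (margXY l) A
           = t * measure (margXY r1) A + (1 - t) * measure (margXY r2) A"
    unfolding margXY_def by (rule conv_distr[OF _ s]) (use H in auto)
  have "margXY r1 = margXY r2"
    using e2 margXY_Pi2[OF r1] margXY_Pi2[OF r2] H cm unfolding extreme_point_def
    by (auto simp: margXY_def)
  have pm: "prob_space (margXY l)" "prob_space (margXY r1)"
    using margXY_Pi2[OF l] margXY_Pi2[OF r1] by (auto simp: Pi2_def borel_prob_def)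
  have "margXY l = margXY r1"
  proof (rule prob_eqI[OF pm])
    show "sets (margXY l) = sets (margXY r1)" by (simp add: margXY_def)
    fix A assume "A \<in> sets (margXY l)"
    then show "measure (margXY l) A = measure (margXY r1) A"
      using cm \<open>margXY r1 = margXY r2\<close> by (auto simp: margXY_def algebra_simps)
  qed
  then have "r1 \<in> Pi_XY \<mu> \<nu> \<gamma> l" "r2 \<in> Pi_XY \<mu> \<nu> \<gamma> l"
    using r1 r2 \<open>margXY r1 = margXY r2\<close> by (auto simp: Pi_XY_def)
  then show "r1 = r2" using e1 H unfolding extreme_point_def by blast
qed

lemma build:
  fixes l :: "'w::topological_space measure" and q :: "'w \<Rightarrow> 'a::topological_space"
  assumes l: "prob_space l" "sets l = sets borel" and q: "q \<in> borel_measurable borel"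
    and p1: "prob_space \<pi>1" "sets \<pi>1 = sets borel"
    and p2: "prob_space \<pi>2" "sets \<pi>2 = sets borel" and t: "0 < t" "t < 1"
    and H: "\<forall>A\<in>sets borel. measure (distr l borel q) A = t * measure \<pi>1 A + (1 - t) * measure \<pi>2 A"
  obtains f1 f2 where "f1 \<in> borel_measurable borel" "f2 \<in> borel_measurable borel"
    "distr (density l (\<lambda>w. f1 (q w))) borel q = \<pi>1"
    "distr (density l (\<lambda>w. f2 (q w))) borel q = \<pi>2"
    "prob_space (density l (\<lambda>w. f1 (q w)))" "prob_space (density l (\<lambda>w. f2 (q w)))"
    "\<forall>A\<in>sets l. measure l A = t * measure (density l (\<lambda>w. f1 (q w))) A
        + (1 - t) * measure (density l (\<lambda>w. f2 (q w))) A"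
proof -
  define L where "L = distr l borel q"
  have ql: "q \<in> l \<rightarrow>\<^sub>M borel" using q measurable_cong_sets[OF l(2) refl] by blast
  have PL: "prob_space L" unfolding L_def by (rule prob_space.prob_space_distr[OF l(1) ql])
  have sL: "sets L = sets borel" unfolding L_def by simp
  interpret L: prob_space L by (rule PL)
  interpret P1: prob_space \<pi>1 by (rule p1(1))
  interpret P2: prob_space \<pi>2 by (rule p2(1))
  have HL: "\<And>A. A \<in> sets L \<Longrightarrow> measure L A = t * measure \<pi>1 A + (1 - t) * measure \<pi>2 A"
    using H sL unfolding L_def by auto
  have ac1: "absolutely_continuous L \<pi>1" and ac2: "absolutely_continuous L \<pi>2"
    unfolding absolutely_continuous_def
  proof -
    show "null_sets L \<subseteq> null_sets \<pi>1"
    proof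
      fix N assume N: "N \<in> null_sets L"
      then have Ns: "N \<in> sets L" and "measure L N = 0" by (auto simp: L.emeasure_eq_measure)
      then have "t * measure \<pi>1 N + (1 - t) * measure \<pi>2 N = 0" using HL by simp
      moreover have "0 \<le> measure \<pi>1 N" "0 \<le> measure \<pi>2 N" by auto
      ultimately have "measure \<pi>1 N = 0" using t
        by (smt (verit, best) mult_nonneg_nonneg mult_pos_pos)
      then show "N \<in> null_sets \<pi>1" using Ns sL p1(2) by (auto simp: P1.emeasure_eq_measure)
    qed
    show "null_sets L \<subseteq> null_sets \<pi>2"
    proof
      fix N assume N: "N \<in> null_sets L"
      then have Ns: "N \<in> sets L" and "measure L N = 0" by (auto simp: L.emeasure_eq_measure)
      then have "t * measure \<pi>1 N + (1 - t) * measure \<pi>2 N = 0" using HL by simp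
      moreover have "0 \<le> measure \<pi>1 N" "0 \<le> measure \<pi>2 N" by auto
      ultimately have "measure \<pi>2 N = 0" using t
        by (smt (verit, best) mult_nonneg_nonneg mult_pos_pos)
      then show "N \<in> null_sets \<pi>2" using Ns sL p2(2) by (auto simp: P2.emeasure_eq_measure)
    qed
  qed
  define f1 where "f1 = RN_deriv L \<pi>1"
  define f2 where "f2 = RN_deriv L \<pi>2"
  have d1: "density L f1 = \<pi>1" unfolding f1_def
    by (rule L.density_RN_deriv[OF ac1]) (simp add: sL p1(2))
  have d2: "density L f2 = \<pi>2" unfolding f2_def
    by (rule L.density_RN_deriv[OF ac2]) (simp add: sL p2(2))
  have m1: "f1 \<in> borel_measurable borel" unfolding f1_def
    using borel_measurable_RN_deriv[of L \<pi>1] measurable_cong_sets[OF sL refl] by blast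
  have m2: "f2 \<in> borel_measurable borel" unfolding f2_def
    using borel_measurable_RN_deriv[of L \<pi>2] measurable_cong_sets[OF sL refl] by blast
  have dd1: "distr (density l (\<lambda>w. f1 (q w))) borel q = \<pi>1"
    using density_distr[OF m1 ql] d1 unfolding L_def by simp
  have dd2: "distr (density l (\<lambda>w. f2 (q w))) borel q = \<pi>2"
    using density_distr[OF m2 ql] d2 unfolding L_def by simp
  have pr: "prob_space (density l (\<lambda>w. f (q w)))"
    if m: "f \<in> borel_measurable borel" and dd: "distr (density l (\<lambda>w. f (q w))) borel q = \<pi>"
      and pp: "prob_space \<pi>" for f \<pi>
  proof (rule prob_spaceI)
    have qd: "q \<in> density l (\<lambda>w. f (q w)) \<rightarrow>\<^sub>M borel" using ql by simp
    have "emeasure \<pi> UNIV = 1" using pp prob_space.emeasure_space_1[OF pp] dd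
      by (metis space_borel space_distr)
    then have "emeasure (distr (density l (\<lambda>w. f (q w))) borel q) UNIV = 1" using dd by simp
    then show "emeasure (density l (\<lambda>w. f (q w))) (space (density l (\<lambda>w. f (q w)))) = 1"
      using emeasure_distr[OF qd, of UNIV] by simp
  qed
  have pr1: "prob_space (density l (\<lambda>w. f1 (q w)))" by (rule pr[OF m1 dd1 p1(1)])
  have pr2: "prob_space (density l (\<lambda>w. f2 (q w)))" by (rule pr[OF m2 dd2 p2(1)])
  define g where "g x = ennreal t * f1 x + ennreal (1 - t) * f2 x" for x
  have mL1: "f1 \<in> borel_measurable L" and mL2: "f2 \<in> borel_measurable L"
    using m1 m2 measurable_cong_sets[OF sL refl] by blast+
  have mg: "g \<in> borel_measurable L" unfolding g_def using mL1 mL2 by measurable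
  have "density L g = density L (\<lambda>_. 1)"
  proof (rule measure_eqI)
    show "sets (density L g) = sets (density L (\<lambda>_. 1))" by simp
    fix A assume "A \<in> sets (density L g)"
    then have A: "A \<in> sets L" by simp
    have "emeasure (density L g) A = (\<integral>\<^sup>+ x. g x * indicator A x \<partial>L)"
      by (rule emeasure_density[OF mg A])
    also have "\<dots> = (\<integral>\<^sup>+ x. ennreal t * (f1 x * indicator A x) + ennreal (1 - t) * (f2 x * indicator A x) \<partial>L)"
      by (rule nn_integral_cong) (simp add: g_def algebra_simps)
    also have "\<dots> = ennreal t * (\<integral>\<^sup>+ x. f1 x * indicator A x \<partial>L) + ennreal (1 - t) * (\<integral>\<^sup>+ x. f2 x * indicator A x \<partial>L)"
      using mL1 mL2 A by (simp add: nn_integral_add nn_integral_cmult)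
    also have "\<dots> = ennreal t * emeasure (density L f1) A + ennreal (1 - t) * emeasure (density L f2) A"
      using mL1 mL2 A by (simp add: emeasure_density)
    also have "\<dots> = ennreal t * ennreal (measure \<pi>1 A) + ennreal (1 - t) * ennreal (measure \<pi>2 A)"
      using d1 d2 by (simp add: P1.emeasure_eq_measure P2.emeasure_eq_measure)
    also have "\<dots> = ennreal (t * measure \<pi>1 A + (1 - t) * measure \<pi>2 A)"
      using t by (simp add: ennreal_mult ennreal_plus)
    also have "\<dots> = emeasure L A" using HL[OF A] by (simp add: L.emeasure_eq_measure)
    also have "\<dots> = emeasure (density L (\<lambda>_. 1)) A" by (simp add: density_1)
    finally show "emeasure (density L g) A = emeasure (density L (\<lambda>_. 1)) A" .
  qed
  then have "AE x in L. g x = 1" by (intro L.density_unique mg) simp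
  then have AEl: "AE w in l. g (q w) = 1" unfolding L_def
    by (subst (asm) AE_distr_iff[OF ql]) (use mg[unfolded L_def] in measurable)
  have conv: "\<forall>A\<in>sets l. measure l A = t * measure (density l (\<lambda>w. f1 (q w))) A
        + (1 - t) * measure (density l (\<lambda>w. f2 (q w))) A"
  proof
    fix A assume A: "A \<in> sets l"
    interpret l: prob_space l by (rule l(1))
    interpret R1: prob_space "density l (\<lambda>w. f1 (q w))" by (rule pr1)
    interpret R2: prob_space "density l (\<lambda>w. f2 (q w))" by (rule pr2)
    have mq1: "(\<lambda>w. f1 (q w)) \<in> borel_measurable l" using m1 ql by measurable
    have mq2: "(\<lambda>w. f2 (q w)) \<in> borel_measurable l" using m2 ql by measurable
    have "emeasure l A = (\<integral>\<^sup>+ w. indicator A w \<partial>l)" using A by simp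
    also have "\<dots> = (\<integral>\<^sup>+ w. g (q w) * indicator A w \<partial>l)"
      by (rule nn_integral_cong_AE) (use AEl in auto)
    also have "\<dots> = (\<integral>\<^sup>+ w. ennreal t * (f1 (q w) * indicator A w) + ennreal (1 - t) * (f2 (q w) * indicator A w) \<partial>l)"
      by (rule nn_integral_cong) (simp add: g_def algebra_simps)
    also have "\<dots> = ennreal t * (\<integral>\<^sup>+ w. f1 (q w) * indicator A w \<partial>l) + ennreal (1 - t) * (\<integral>\<^sup>+ w. f2 (q w) * indicator A w \<partial>l)"
      using mq1 mq2 A by (simp add: nn_integral_add nn_integral_cmult)
    also have "\<dots> = ennreal t * emeasure (density l (\<lambda>w. f1 (q w))) A + ennreal (1 - t) * emeasure (density l (\<lambda>w. f2 (q w))) A"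
      using mq1 mq2 A by (simp add: emeasure_density)
    also have "\<dots> = ennreal (t * measure (density l (\<lambda>w. f1 (q w))) A + (1 - t) * measure (density l (\<lambda>w. f2 (q w))) A)"
      using t by (simp add: R1.emeasure_eq_measure R2.emeasure_eq_measure ennreal_mult ennreal_plus)
    finally have "ennreal (measure l A) = ennreal (t * measure (density l (\<lambda>w. f1 (q w))) A
        + (1 - t) * measure (density l (\<lambda>w. f2 (q w))) A)"
      by (simp only: l.emeasure_eq_measure)
    moreover have "0 \<le> t * measure (density l (\<lambda>w. f1 (q w))) A
        + (1 - t) * measure (density l (\<lambda>w. f2 (q w))) A" using t by simp
    ultimately show "measure l A = t * measure (density l (\<lambda>w. f1 (q w))) A
        + (1 - t) * measure (density l (\<lambda>w. f2 (q w))) A"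
      by (subst (asm) ennreal_inj) auto
  qed
  show ?thesis by (rule that[OF m1 m2 dd1 dd2 pr1 pr2 conv])
qed

lemma kernel_facts:
  assumes "prob_kernel k"
  shows "prob_space (k x)" "sets (k x) = sets borel" "k \<in> borel \<rightarrow>\<^sub>M subprob_algebra borel"
proof -
  have "k \<in> borel \<rightarrow>\<^sub>M prob_algebra borel" using assms by (simp add: prob_kernel_def)
  then have "k x \<in> space (prob_algebra borel)" by (rule measurable_space) simp
  then show "prob_space (k x)" "sets (k x) = sets borel" by (auto simp: space_prob_algebra)
  show "k \<in> borel \<rightarrow>\<^sub>M subprob_algebra borel"
    using \<open>k \<in> borel \<rightarrow>\<^sub>M prob_algebra borel\<close> by (rule measurable_prob_algebraD)
qed

lemma borel3:
  "(borel \<Otimes>\<^sub>M (borel \<Otimes>\<^sub>M borel)) =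
    (borel :: ('x::second_countable_topology \<times> 'y::second_countable_topology \<times> 'z::second_countable_topology) measure)"
  by (simp add: borel_prod)

lemma compound_bind:
  fixes \<mu> :: "'x::polish_space measure" and \<nu>x :: "'x \<Rightarrow> 'y::polish_space measure"
    and \<gamma>x :: "'x \<Rightarrow> 'z::polish_space measure" and l :: "('x \<times> 'y \<times> 'z) measure"
  assumes mu: "borel_prob \<mu>" and kn: "prob_kernel \<nu>x" and kg: "prob_kernel \<gamma>x"
    and l: "prob_space l" "sets l = sets borel"
    and c: "is_compound l (\<lambda>x. \<nu>x x \<Otimes>\<^sub>M \<gamma>x x) \<mu>"
  shows "l = \<mu> \<bind> (\<lambda>x. return borel x \<Otimes>\<^sub>M (\<nu>x x \<Otimes>\<^sub>M \<gamma>x x))"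
    and "(\<lambda>x. return borel x \<Otimes>\<^sub>M (\<nu>x x \<Otimes>\<^sub>M \<gamma>x x)) \<in> \<mu> \<rightarrow>\<^sub>M subprob_algebra (borel \<Otimes>\<^sub>M (borel \<Otimes>\<^sub>M borel))"
proof -
  define K where "K x = return borel x \<Otimes>\<^sub>M (\<nu>x x \<Otimes>\<^sub>M \<gamma>x x)" for x
  have smu: "sets \<mu> = sets borel" and pmu: "prob_space \<mu>" using mu by (auto simp: borel_prob_def)
  have Kb: "K \<in> borel \<rightarrow>\<^sub>M subprob_algebra (borel \<Otimes>\<^sub>M (borel \<Otimes>\<^sub>M borel))"
    unfolding K_def
    by (intro measurable_pair_measure return_measurable kernel_facts(3)[OF kn] kernel_facts(3)[OF kg])
  then show Km: "(\<lambda>x. return borel x \<Otimes>\<^sub>M (\<nu>x x \<Otimes>\<^sub>M \<gamma>x x)) \<in> \<mu> \<rightarrow>\<^sub>M subprob_algebra (borel \<Otimes>\<^sub>M (borel \<Otimes>\<^sub>M borel))"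
    unfolding K_def[symmetric] using measurable_cong_sets[OF smu refl] by blast
  have pk: "prob_space (\<nu>x x \<Otimes>\<^sub>M \<gamma>x x)" for x
    by (intro prob_space_pair kernel_facts(1)[OF kn] kernel_facts(1)[OF kg])
  have sk: "sets (\<nu>x x \<Otimes>\<^sub>M \<gamma>x x) = sets (borel :: ('y \<times> 'z) measure)" for x
    by (subst borel_prod[symmetric]) (rule sets_pair_measure_cong[OF kernel_facts(2)[OF kn] kernel_facts(2)[OF kg]])
  have sK: "sets (K x) = sets (borel \<Otimes>\<^sub>M (borel \<Otimes>\<^sub>M borel))" for x
    unfolding K_def by (rule sets_pair_measure_cong[OF sets_return sets_pair_measure_cong[OF kernel_facts(2)[OF kn] kernel_facts(2)[OF kg]]])
  have spmu: "space \<mu> \<noteq> {}" using smu by (metis UNIV_not_empty sets_eq_imp_space_eq space_borel)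
  define E where "E = {a \<times> b | a b. a \<in> sets (borel :: 'x measure) \<and> b \<in> sets (borel :: ('y \<times> 'z) measure)}"
  have sE: "sets (borel :: ('x \<times> 'y \<times> 'z) measure) = sigma_sets UNIV E"
  proof -
    have "sets (borel :: ('x \<times> 'y \<times> 'z) measure) = sets (borel \<Otimes>\<^sub>M (borel :: ('y \<times> 'z) measure))"
      by (simp only: borel_prod)
    also have "\<dots> = sigma_sets (space borel \<times> space borel) E"
      unfolding E_def by (rule sets_pair_measure)
    finally show ?thesis by simp
  qed
  show "l = \<mu> \<bind> (\<lambda>x. return borel x \<Otimes>\<^sub>M (\<nu>x x \<Otimes>\<^sub>M \<gamma>x x))"
    unfolding K_def[symmetric]
  proof (rule measure_eqI_generator_eq[where E=E and \<Omega>=UNIV and A="\<lambda>_. UNIV"])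
    show "Int_stable E" unfolding E_def by (rule Int_stable_pair_measure_generator)
    show "E \<subseteq> Pow UNIV" by simp
    show "sets l = sigma_sets UNIV E" using l(2) sE by simp
    show "sets (\<mu> \<bind> K) = sigma_sets UNIV E"
    proof -
      have "sets (\<mu> \<bind> K) = sets (borel \<Otimes>\<^sub>M (borel \<Otimes>\<^sub>M borel))"
        by (rule sets_bind) (use sK spmu in auto)
      then show ?thesis using sE by (simp only: borel3)
    qed
    show "range (\<lambda>_. UNIV) \<subseteq> E" unfolding E_def
      by (auto intro!: exI[of _ UNIV])
    show "(\<Union>i. UNIV) = UNIV" by simp
    have "space l = UNIV" using sets_eq_imp_space_eq[OF l(2)] by simp
    then show "emeasure l UNIV \<noteq> \<infinity>" for i :: nat using prob_space.emeasure_space_1[OF l(1)]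
      by simp
    fix X assume "X \<in> E"
    then obtain a b where X: "X = a \<times> b" and a: "a \<in> sets (borel :: 'x measure)"
      and b: "b \<in> sets (borel :: ('y \<times> 'z) measure)" unfolding E_def by auto
    have "emeasure l X = (\<integral>\<^sup>+ x. indicator a x * emeasure (\<nu>x x \<Otimes>\<^sub>M \<gamma>x x) b \<partial>\<mu>)"
      using c a b unfolding X is_compound_def by blast
    also have "\<dots> = (\<integral>\<^sup>+ x. emeasure (K x) X \<partial>\<mu>)"
    proof (rule nn_integral_cong)
      fix x
      interpret sigma_finite_measure "\<nu>x x \<Otimes>\<^sub>M \<gamma>x x"
        by (rule prob_space_imp_sigma_finite[OF pk])
      have "emeasure (K x) X = emeasure (return borel x) a * emeasure (\<nu>x x \<Otimes>\<^sub>M \<gamma>x x) b"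
        unfolding K_def X using a b sk[of x] by (intro emeasure_pair_measure_Times) auto
      then show "indicator a x * emeasure (\<nu>x x \<Otimes>\<^sub>M \<gamma>x x) b = emeasure (K x) X"
        using a by (simp add: emeasure_return)
    qed
    also have "\<dots> = emeasure (\<mu> \<bind> K) X"
    proof -
      have Km': "K \<in> \<mu> \<rightarrow>\<^sub>M subprob_algebra borel" using Km[folded K_def] by (simp only: borel3)
      have Xs: "X \<in> sets borel" using \<open>X \<in> E\<close> sE by (simp add: sigma_sets.Basic)
      show ?thesis by (rule emeasure_bind[OF spmu Km' Xs, symmetric])
    qed
    finally show "emeasure l X = emeasure (\<mu> \<bind> K) X" .
  qed
qed

lemma compound_integral:
  fixes \<mu> :: "'x::polish_space measure" and \<nu>x :: "'x \<Rightarrow> 'y::polish_space measure"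
    and \<gamma>x :: "'x \<Rightarrow> 'z::polish_space measure" and l :: "('x \<times> 'y \<times> 'z) measure"
  assumes mu: "borel_prob \<mu>" and kn: "prob_kernel \<nu>x" and kg: "prob_kernel \<gamma>x"
    and l: "prob_space l" "sets l = sets borel"
    and c: "is_compound l (\<lambda>x. \<nu>x x \<Otimes>\<^sub>M \<gamma>x x) \<mu>"
    and phi: "\<phi> \<in> borel_measurable borel"
  shows "(\<integral>\<^sup>+ w. \<phi> w \<partial>l) = (\<integral>\<^sup>+ x. \<integral>\<^sup>+ y. \<integral>\<^sup>+ z. \<phi> (x, y, z) \<partial>\<gamma>x x \<partial>\<nu>x x \<partial>\<mu>)"
    and "(\<integral>\<^sup>+ w. \<phi> w \<partial>l) = (\<integral>\<^sup>+ x. \<integral>\<^sup>+ z. \<integral>\<^sup>+ y. \<phi> (x, y, z) \<partial>\<nu>x x \<partial>\<gamma>x x \<partial>\<mu>)"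
proof -
  define K where "K x = return borel x \<Otimes>\<^sub>M (\<nu>x x \<Otimes>\<^sub>M \<gamma>x x)" for x
  have eq: "l = \<mu> \<bind> K" unfolding K_def by (rule compound_bind(1)[OF mu kn kg l c])
  have Km': "K \<in> \<mu> \<rightarrow>\<^sub>M subprob_algebra borel"
    using compound_bind(2)[OF mu kn kg l c, folded K_def] by (simp only: borel3)
  have pk: "prob_space (\<nu>x x \<Otimes>\<^sub>M \<gamma>x x)" for x
    by (intro prob_space_pair kernel_facts(1)[OF kn] kernel_facts(1)[OF kg])
  have sk: "sets (\<nu>x x \<Otimes>\<^sub>M \<gamma>x x) = sets (borel :: ('y \<times> 'z) measure)" for x
    by (subst borel_prod[symmetric]) (rule sets_pair_measure_cong[OF kernel_facts(2)[OF kn] kernel_facts(2)[OF kg]])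
  have sK: "sets (K x) = sets (borel \<Otimes>\<^sub>M (borel :: ('y \<times> 'z) measure))" for x
    unfolding K_def by (rule sets_pair_measure_cong[OF sets_return sk])
  have inner: "(\<integral>\<^sup>+ w. \<phi> w \<partial>K x) = (\<integral>\<^sup>+ w. \<phi> (x, w) \<partial>(\<nu>x x \<Otimes>\<^sub>M \<gamma>x x))" for x
  proof -
    interpret N: sigma_finite_measure "\<nu>x x \<Otimes>\<^sub>M \<gamma>x x" by (rule prob_space_imp_sigma_finite[OF pk])
    have phi': "\<phi> \<in> borel_measurable (borel \<Otimes>\<^sub>M (borel :: ('y \<times> 'z) measure))"
      using phi by (simp only: borel_prod)
    have phiK: "\<phi> \<in> borel_measurable (return borel x \<Otimes>\<^sub>M (\<nu>x x \<Otimes>\<^sub>M \<gamma>x x))"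
      using phi' measurable_cong_sets[OF sK[of x, unfolded K_def] refl] by blast
    have phiB: "\<phi> \<in> borel_measurable (borel \<Otimes>\<^sub>M (\<nu>x x \<Otimes>\<^sub>M \<gamma>x x))"
      using phi' measurable_cong_sets[OF sets_pair_measure_cong[OF refl sk[of x]] refl] by blast
    have "(\<integral>\<^sup>+ w. \<phi> w \<partial>K x) = (\<integral>\<^sup>+ a. \<integral>\<^sup>+ w. \<phi> (a, w) \<partial>(\<nu>x x \<Otimes>\<^sub>M \<gamma>x x) \<partial>return borel x)"
      unfolding K_def by (rule N.nn_integral_fst[OF phiK, symmetric])
    also have "\<dots> = (\<integral>\<^sup>+ w. \<phi> (x, w) \<partial>(\<nu>x x \<Otimes>\<^sub>M \<gamma>x x))"
      by (rule nn_integral_return) (auto intro: N.borel_measurable_nn_integral_fst[OF phiB])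
    finally show ?thesis .
  qed
  have phix: "(\<lambda>w. \<phi> (x, w)) \<in> borel_measurable (\<nu>x x \<Otimes>\<^sub>M \<gamma>x x)" for x
  proof -
    have "(\<lambda>w. (x, w)) \<in> (borel :: ('y \<times> 'z) measure) \<rightarrow>\<^sub>M (borel :: ('x \<times> 'y \<times> 'z) measure)"
      by (rule borel_measurable_continuous_onI) (intro continuous_intros)
    then have "(\<lambda>w. \<phi> (x, w)) \<in> borel_measurable borel" using phi by (rule measurable_compose)
    then show ?thesis using measurable_cong_sets[OF sk[of x] refl] by blast
  qed
  have ps: "pair_sigma_finite (\<nu>x x) (\<gamma>x x)" for x
    by (intro pair_sigma_finite.intro prob_space_imp_sigma_finite kernel_facts(1)[OF kn] kernel_facts(1)[OF kg])
  have "(\<integral>\<^sup>+ w. \<phi> w \<partial>l) = (\<integral>\<^sup>+ x. \<integral>\<^sup>+ w. \<phi> (x, w) \<partial>(\<nu>x x \<Otimes>\<^sub>M \<gamma>x x) \<partial>\<mu>)"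
    unfolding eq nn_integral_bind[OF phi Km'] inner ..
  note base = this
  show "(\<integral>\<^sup>+ w. \<phi> w \<partial>l) = (\<integral>\<^sup>+ x. \<integral>\<^sup>+ y. \<integral>\<^sup>+ z. \<phi> (x, y, z) \<partial>\<gamma>x x \<partial>\<nu>x x \<partial>\<mu>)"
    unfolding base by (rule nn_integral_cong) (rule sigma_finite_measure.nn_integral_fst[OF prob_space_imp_sigma_finite[OF kernel_facts(1)[OF kg]] phix, symmetric])
  show "(\<integral>\<^sup>+ w. \<phi> w \<partial>l) = (\<integral>\<^sup>+ x. \<integral>\<^sup>+ z. \<integral>\<^sup>+ y. \<phi> (x, y, z) \<partial>\<nu>x x \<partial>\<gamma>x x \<partial>\<mu>)"
    unfolding base by (rule nn_integral_cong) (rule pair_sigma_finite.nn_integral_snd[OF ps phix, symmetric])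
qed

lemma rect_eq:
  fixes M N :: "('a::second_countable_topology \<times> 'b::second_countable_topology) measure"
  assumes s: "sets M = sets borel" "sets N = sets borel" and fin: "emeasure M UNIV \<noteq> \<infinity>"
    and eq: "\<And>a b. a \<in> sets borel \<Longrightarrow> b \<in> sets borel \<Longrightarrow> emeasure M (a \<times> b) = emeasure N (a \<times> b)"
  shows "M = N"
proof -
  define E where "E = {a \<times> b | a b. a \<in> sets (borel :: 'a measure) \<and> b \<in> sets (borel :: 'b measure)}"
  have sE: "sets (borel :: ('a \<times> 'b) measure) = sigma_sets UNIV E"
  proof -
    have "sets (borel :: ('a \<times> 'b) measure) = sets (borel \<Otimes>\<^sub>M (borel :: 'b measure))"
      by (simp only: borel_prod)
    also have "\<dots> = sigma_sets (space borel \<times> space borel) E"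
      unfolding E_def by (rule sets_pair_measure)
    finally show ?thesis by simp
  qed
  show ?thesis
  proof (rule measure_eqI_generator_eq[where E=E and \<Omega>=UNIV and A="\<lambda>_. UNIV"])
    show "Int_stable E" unfolding E_def by (rule Int_stable_pair_measure_generator)
    show "E \<subseteq> Pow UNIV" by simp
    show "sets M = sigma_sets UNIV E" using s(1) sE by simp
    show "sets N = sigma_sets UNIV E" using s(2) sE by simp
    show "range (\<lambda>_. UNIV) \<subseteq> E" unfolding E_def by (auto intro!: exI[of _ UNIV])
    show "(\<Union>i. UNIV) = UNIV" by simp
    show "emeasure M UNIV \<noteq> \<infinity>" for i :: nat by (rule fin)
    fix X assume "X \<in> E"
    then show "emeasure M X = emeasure N X" unfolding E_def using eq by auto
  qed
qed

lemma gsec: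
  fixes g :: "'a::topological_space \<times> 'b::topological_space \<Rightarrow> 'c::topological_space"
  assumes "g \<in> borel_measurable borel"
  shows "(\<lambda>z. g (x, z)) \<in> borel_measurable borel" "(\<lambda>z. g (z, y)) \<in> borel_measurable borel"
proof -
  have "(\<lambda>z. (x, z)) \<in> (borel :: 'b measure) \<rightarrow>\<^sub>M (borel :: ('a \<times> 'b) measure)"
    by (rule borel_measurable_continuous_onI) (intro continuous_intros)
  then show "(\<lambda>z. g (x, z)) \<in> borel_measurable borel" using assms by (rule measurable_compose)
  have "(\<lambda>z. (z, y)) \<in> (borel :: 'a measure) \<rightarrow>\<^sub>M (borel :: ('a \<times> 'b) measure)"
    by (rule borel_measurable_continuous_onI) (intro continuous_intros)
  then show "(\<lambda>z. g (z, y)) \<in> borel_measurable borel" using assms by (rule measurable_compose)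
qed

lemma rect_XZ:
  fixes \<mu> :: "'x::polish_space measure" and \<nu>x :: "'x \<Rightarrow> 'y::polish_space measure"
    and \<gamma>x :: "'x \<Rightarrow> 'z::polish_space measure" and l :: "('x \<times> 'y \<times> 'z) measure"
  assumes mu: "borel_prob \<mu>" and kn: "prob_kernel \<nu>x" and kg: "prob_kernel \<gamma>x"
    and l: "prob_space l" "sets l = sets borel"
    and c: "is_compound l (\<lambda>x. \<nu>x x \<Otimes>\<^sub>M \<gamma>x x) \<mu>"
    and g: "g \<in> borel_measurable borel"
    and hg: "distr (density (distr l borel pXZ) g) borel fst = \<mu>"
    and a: "a \<in> sets borel" and b: "b \<in> sets borel"
  shows "emeasure (distr (density l (\<lambda>w. g (pXZ w))) borel pXY) (a \<times> b)
       = (\<integral>\<^sup>+ x. indicator a x * emeasure (\<nu>x x) b \<partial>\<mu>)"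
proof -
  note [measurable] = g
  define H where "H x = indicator a x * emeasure (\<nu>x x) b" for x
  have Hm[measurable]: "H \<in> borel_measurable borel" unfolding H_def
    using measurable_emeasure_kernel[OF kernel_facts(3)[OF kn] b] a by measurable
  note [measurable] = a b meas_fs
  have m1: "(\<lambda>w. g (pXZ w) * indicator a (pX w) * indicator b (pY w)) \<in> borel_measurable borel"
    by measurable
  have m2: "(\<lambda>w. H (pX w) * g (pXZ w)) \<in> borel_measurable borel"
    by measurable
  have spl: "space l = UNIV" using sets_eq_imp_space_eq[OF l(2)] by simp
  have sml: "sets \<mu> = sets borel" using mu by (simp add: borel_prob_def)
  have pXYl0: "pXY \<in> l \<rightarrow>\<^sub>M borel"
    using measurable_cong_sets[OF l(2) refl] meas_proj(4) by blast
  have pXYl: "pXY \<in> density l (\<lambda>w. g (pXZ w)) \<rightarrow>\<^sub>M borel"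
    using pXYl0 measurable_cong_sets[OF sets_density refl] by blast
  have pXZl: "pXZ \<in> l \<rightarrow>\<^sub>M borel" using measurable_cong_sets[OF l(2) refl] meas_proj(6) by blast
  have gl: "(\<lambda>w. g (pXZ w)) \<in> borel_measurable l" using pXZl g by (rule measurable_compose)
  have gz: "(\<lambda>z. g (x, z)) \<in> borel_measurable (\<gamma>x x)" for x
    using gsec(1)[OF g, of x] measurable_cong_sets[OF kernel_facts(2)[OF kg] refl] by blast
  have ab: "a \<times> b \<in> sets borel" using a b by (simp only: borel_prod[symmetric]) simp
  have "emeasure (distr (density l (\<lambda>w. g (pXZ w))) borel pXY) (a \<times> b)
      = emeasure (density l (\<lambda>w. g (pXZ w))) (pXY -` (a \<times> b))"
    using emeasure_distr[OF pXYl ab] spl by simp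
  also have "\<dots> = (\<integral>\<^sup>+ w. g (pXZ w) * indicator (pXY -` (a \<times> b)) w \<partial>l)"
    using emeasure_density[OF gl, of "pXY -` (a \<times> b)"] measurable_sets[OF pXYl0 ab] spl by simp
  also have "\<dots> = (\<integral>\<^sup>+ w. g (pXZ w) * indicator a (pX w) * indicator b (pY w) \<partial>l)"
    by (rule nn_integral_cong) (auto simp: pXY_def pX_def pY_def split: split_indicator)
  also have "\<dots> = (\<integral>\<^sup>+ x. \<integral>\<^sup>+ y. \<integral>\<^sup>+ z. g (x, z) * indicator a x * indicator b y \<partial>\<gamma>x x \<partial>\<nu>x x \<partial>\<mu>)"
    by (subst compound_integral(1)[OF mu kn kg l c m1]) (auto simp: pXZ_def pX_def pY_def)
  also have "\<dots> = (\<integral>\<^sup>+ x. H x * (\<integral>\<^sup>+ z. g (x, z) \<partial>\<gamma>x x) \<partial>\<mu>)"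
  proof (rule nn_integral_cong)
    fix x
    have "(\<integral>\<^sup>+ y. \<integral>\<^sup>+ z. g (x, z) * indicator a x * indicator b y \<partial>\<gamma>x x \<partial>\<nu>x x)
       = (\<integral>\<^sup>+ y. (indicator a x * (\<integral>\<^sup>+ z. g (x, z) \<partial>\<gamma>x x)) * indicator b y \<partial>\<nu>x x)"
    proof (rule nn_integral_cong)
      fix y
      have "(\<integral>\<^sup>+ z. g (x, z) * indicator a x * indicator b y \<partial>\<gamma>x x)
          = (\<integral>\<^sup>+ z. (indicator a x * indicator b y) * g (x, z) \<partial>\<gamma>x x)"
        by (rule nn_integral_cong) (simp add: mult_ac)
      also have "\<dots> = (indicator a x * indicator b y) * (\<integral>\<^sup>+ z. g (x, z) \<partial>\<gamma>x x)"
        by (rule nn_integral_cmult[OF gz])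
      finally show "(\<integral>\<^sup>+ z. g (x, z) * indicator a x * indicator b y \<partial>\<gamma>x x)
          = (indicator a x * (\<integral>\<^sup>+ z. g (x, z) \<partial>\<gamma>x x)) * indicator b y" by (simp add: mult_ac)
    qed
    also have "\<dots> = (indicator a x * (\<integral>\<^sup>+ z. g (x, z) \<partial>\<gamma>x x)) * emeasure (\<nu>x x) b"
      by (rule nn_integral_cmult_indicator) (use b kernel_facts(2)[OF kn] in simp)
    finally show "(\<integral>\<^sup>+ y. \<integral>\<^sup>+ z. g (x, z) * indicator a x * indicator b y \<partial>\<gamma>x x \<partial>\<nu>x x)
       = H x * (\<integral>\<^sup>+ z. g (x, z) \<partial>\<gamma>x x)" by (simp add: H_def mult_ac)
  qed
  also have "\<dots> = (\<integral>\<^sup>+ x. \<integral>\<^sup>+ y. \<integral>\<^sup>+ z. H x * g (x, z) \<partial>\<gamma>x x \<partial>\<nu>x x \<partial>\<mu>)"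
  proof (rule nn_integral_cong)
    fix x
    have sp: "space (\<nu>x x) = UNIV" using sets_eq_imp_space_eq[OF kernel_facts(2)[OF kn]] by simp
    have "(\<integral>\<^sup>+ y. \<integral>\<^sup>+ z. H x * g (x, z) \<partial>\<gamma>x x \<partial>\<nu>x x) = (\<integral>\<^sup>+ y. H x * (\<integral>\<^sup>+ z. g (x, z) \<partial>\<gamma>x x) \<partial>\<nu>x x)"
      by (rule nn_integral_cong) (rule nn_integral_cmult[OF gz])
    also have "\<dots> = H x * (\<integral>\<^sup>+ z. g (x, z) \<partial>\<gamma>x x)"
    proof -
      have "emeasure (\<nu>x x) UNIV = 1" using prob_space.emeasure_space_1[OF kernel_facts(1)[OF kn, of x]] sp by simp
      then show ?thesis using sp by (simp add: nn_integral_const)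
    qed
    finally show "H x * (\<integral>\<^sup>+ z. g (x, z) \<partial>\<gamma>x x) = (\<integral>\<^sup>+ y. \<integral>\<^sup>+ z. H x * g (x, z) \<partial>\<gamma>x x \<partial>\<nu>x x)" ..
  qed
  also have "\<dots> = (\<integral>\<^sup>+ w. H (pX w) * g (pXZ w) \<partial>l)"
    by (subst compound_integral(1)[OF mu kn kg l c m2]) (auto simp: pXZ_def pX_def pY_def)
  also have "\<dots> = (\<integral>\<^sup>+ v. H (fst v) * g v \<partial>(distr l borel pXZ))"
    by (subst nn_integral_distr[OF pXZl]) (auto simp: pXZ_def pX_def)
  also have "\<dots> = (\<integral>\<^sup>+ v. H (fst v) \<partial>(density (distr l borel pXZ) g))"
    by (subst nn_integral_density) (auto simp: mult.commute)
  also have "\<dots> = (\<integral>\<^sup>+ x. H x \<partial>(distr (density (distr l borel pXZ) g) borel fst))"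
    by (subst nn_integral_distr) auto
  also have "\<dots> = (\<integral>\<^sup>+ x. H x \<partial>\<mu>)" using hg by simp
  finally show ?thesis unfolding H_def .
qed


lemma rect_XY:
  fixes \<mu> :: "'x::polish_space measure" and \<nu>x :: "'x \<Rightarrow> 'y::polish_space measure"
    and \<gamma>x :: "'x \<Rightarrow> 'z::polish_space measure" and l :: "('x \<times> 'y \<times> 'z) measure"
  assumes mu: "borel_prob \<mu>" and kn: "prob_kernel \<nu>x" and kg: "prob_kernel \<gamma>x"
    and l: "prob_space l" "sets l = sets borel"
    and c: "is_compound l (\<lambda>x. \<nu>x x \<Otimes>\<^sub>M \<gamma>x x) \<mu>"
    and g: "g \<in> borel_measurable borel"
    and hg: "distr (density (distr l borel pXY) g) borel fst = \<mu>"
    and a: "a \<in> sets borel" and b: "b \<in> sets borel"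
  shows "emeasure (distr (density l (\<lambda>w. g (pXY w))) borel pXZ) (a \<times> b)
       = (\<integral>\<^sup>+ x. indicator a x * emeasure (\<gamma>x x) b \<partial>\<mu>)"
proof -
  note [measurable] = g
  define H where "H x = indicator a x * emeasure (\<gamma>x x) b" for x
  have Hm[measurable]: "H \<in> borel_measurable borel" unfolding H_def
    using measurable_emeasure_kernel[OF kernel_facts(3)[OF kg] b] a by measurable
  note [measurable] = a b meas_fs
  have m1: "(\<lambda>w. g (pXY w) * indicator a (pX w) * indicator b (pZ w)) \<in> borel_measurable borel"
    by measurable
  have m2: "(\<lambda>w. H (pX w) * g (pXY w)) \<in> borel_measurable borel"
    by measurable
  have spl: "space l = UNIV" using sets_eq_imp_space_eq[OF l(2)] by simp
  have sml: "sets \<mu> = sets borel" using mu by (simp add: borel_prob_def)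
  have pXZl0: "pXZ \<in> l \<rightarrow>\<^sub>M borel"
    using measurable_cong_sets[OF l(2) refl] meas_proj(6) by blast
  have pXZl: "pXZ \<in> density l (\<lambda>w. g (pXY w)) \<rightarrow>\<^sub>M borel"
    using pXZl0 measurable_cong_sets[OF sets_density refl] by blast
  have pXYl: "pXY \<in> l \<rightarrow>\<^sub>M borel" using measurable_cong_sets[OF l(2) refl] meas_proj(4) by blast
  have gl: "(\<lambda>w. g (pXY w)) \<in> borel_measurable l" using pXYl g by (rule measurable_compose)
  have gz: "(\<lambda>z. g (x, z)) \<in> borel_measurable (\<nu>x x)" for x
    using gsec(1)[OF g, of x] measurable_cong_sets[OF kernel_facts(2)[OF kn] refl] by blast
  have ab: "a \<times> b \<in> sets borel" using a b by (simp only: borel_prod[symmetric]) simp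
  have "emeasure (distr (density l (\<lambda>w. g (pXY w))) borel pXZ) (a \<times> b)
      = emeasure (density l (\<lambda>w. g (pXY w))) (pXZ -` (a \<times> b))"
    using emeasure_distr[OF pXZl ab] spl by simp
  also have "\<dots> = (\<integral>\<^sup>+ w. g (pXY w) * indicator (pXZ -` (a \<times> b)) w \<partial>l)"
    using emeasure_density[OF gl, of "pXZ -` (a \<times> b)"] measurable_sets[OF pXZl0 ab] spl by simp
  also have "\<dots> = (\<integral>\<^sup>+ w. g (pXY w) * indicator a (pX w) * indicator b (pZ w) \<partial>l)"
    by (rule nn_integral_cong) (auto simp: pXZ_def pX_def pZ_def split: split_indicator)
  also have "\<dots> = (\<integral>\<^sup>+ x. \<integral>\<^sup>+ y. \<integral>\<^sup>+ z. g (x, z) * indicator a x * indicator b y \<partial>\<nu>x x \<partial>\<gamma>x x \<partial>\<mu>)"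
    by (subst compound_integral(2)[OF mu kn kg l c m1]) (auto simp: pXY_def pX_def pZ_def)
  also have "\<dots> = (\<integral>\<^sup>+ x. H x * (\<integral>\<^sup>+ z. g (x, z) \<partial>\<nu>x x) \<partial>\<mu>)"
  proof (rule nn_integral_cong)
    fix x
    have "(\<integral>\<^sup>+ y. \<integral>\<^sup>+ z. g (x, z) * indicator a x * indicator b y \<partial>\<nu>x x \<partial>\<gamma>x x)
       = (\<integral>\<^sup>+ y. (indicator a x * (\<integral>\<^sup>+ z. g (x, z) \<partial>\<nu>x x)) * indicator b y \<partial>\<gamma>x x)"
    proof (rule nn_integral_cong)
      fix y
      have "(\<integral>\<^sup>+ z. g (x, z) * indicator a x * indicator b y \<partial>\<nu>x x)
          = (\<integral>\<^sup>+ z. (indicator a x * indicator b y) * g (x, z) \<partial>\<nu>x x)"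
        by (rule nn_integral_cong) (simp add: mult_ac)
      also have "\<dots> = (indicator a x * indicator b y) * (\<integral>\<^sup>+ z. g (x, z) \<partial>\<nu>x x)"
        by (rule nn_integral_cmult[OF gz])
      finally show "(\<integral>\<^sup>+ z. g (x, z) * indicator a x * indicator b y \<partial>\<nu>x x)
          = (indicator a x * (\<integral>\<^sup>+ z. g (x, z) \<partial>\<nu>x x)) * indicator b y" by (simp add: mult_ac)
    qed
    also have "\<dots> = (indicator a x * (\<integral>\<^sup>+ z. g (x, z) \<partial>\<nu>x x)) * emeasure (\<gamma>x x) b"
      by (rule nn_integral_cmult_indicator) (use b kernel_facts(2)[OF kg] in simp)
    finally show "(\<integral>\<^sup>+ y. \<integral>\<^sup>+ z. g (x, z) * indicator a x * indicator b y \<partial>\<nu>x x \<partial>\<gamma>x x)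
       = H x * (\<integral>\<^sup>+ z. g (x, z) \<partial>\<nu>x x)" by (simp add: H_def mult_ac)
  qed
  also have "\<dots> = (\<integral>\<^sup>+ x. \<integral>\<^sup>+ y. \<integral>\<^sup>+ z. H x * g (x, z) \<partial>\<nu>x x \<partial>\<gamma>x x \<partial>\<mu>)"
  proof (rule nn_integral_cong)
    fix x
    have sp: "space (\<gamma>x x) = UNIV" using sets_eq_imp_space_eq[OF kernel_facts(2)[OF kg]] by simp
    have "(\<integral>\<^sup>+ y. \<integral>\<^sup>+ z. H x * g (x, z) \<partial>\<nu>x x \<partial>\<gamma>x x) = (\<integral>\<^sup>+ y. H x * (\<integral>\<^sup>+ z. g (x, z) \<partial>\<nu>x x) \<partial>\<gamma>x x)"
      by (rule nn_integral_cong) (rule nn_integral_cmult[OF gz])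
    also have "\<dots> = H x * (\<integral>\<^sup>+ z. g (x, z) \<partial>\<nu>x x)"
    proof -
      have "emeasure (\<gamma>x x) UNIV = 1" using prob_space.emeasure_space_1[OF kernel_facts(1)[OF kg, of x]] sp by simp
      then show ?thesis using sp by (simp add: nn_integral_const)
    qed
    finally show "H x * (\<integral>\<^sup>+ z. g (x, z) \<partial>\<nu>x x) = (\<integral>\<^sup>+ y. \<integral>\<^sup>+ z. H x * g (x, z) \<partial>\<nu>x x \<partial>\<gamma>x x)" ..
  qed
  also have "\<dots> = (\<integral>\<^sup>+ w. H (pX w) * g (pXY w) \<partial>l)"
    by (subst compound_integral(2)[OF mu kn kg l c m2]) (auto simp: pXY_def pX_def pZ_def)
  also have "\<dots> = (\<integral>\<^sup>+ v. H (fst v) * g v \<partial>(distr l borel pXY))"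
    by (subst nn_integral_distr[OF pXYl]) (auto simp: pXY_def pX_def)
  also have "\<dots> = (\<integral>\<^sup>+ v. H (fst v) \<partial>(density (distr l borel pXY) g))"
    by (subst nn_integral_density) (auto simp: mult.commute)
  also have "\<dots> = (\<integral>\<^sup>+ x. H x \<partial>(distr (density (distr l borel pXY) g) borel fst))"
    by (subst nn_integral_distr) auto
  also have "\<dots> = (\<integral>\<^sup>+ x. H x \<partial>\<mu>)" using hg by simp
  finally show ?thesis unfolding H_def .
qed

lemma key_XZ:
  fixes \<mu> :: "'x::polish_space measure" and \<nu>x :: "'x \<Rightarrow> 'y::polish_space measure"
    and \<gamma>x :: "'x \<Rightarrow> 'z::polish_space measure" and l :: "('x \<times> 'y \<times> 'z) measure"
  assumes mu: "borel_prob \<mu>" and kn: "prob_kernel \<nu>x" and kg: "prob_kernel \<gamma>x"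
    and l: "l \<in> Pi3 \<mu> \<nu> \<gamma>"
    and c: "is_compound l (\<lambda>x. \<nu>x x \<Otimes>\<^sub>M \<gamma>x x) \<mu>"
    and f: "f \<in> borel_measurable borel"
    and hf: "distr (density (margXZ l) f) borel fst = \<mu>"
  shows "margXY (density l (\<lambda>w. f (pXZ w))) = margXY l"
proof -
  have bl: "borel_prob l" and lX: "distr l borel pX = \<mu>" using l by (auto simp: Pi3_def)
  have pl: "prob_space l" and sl: "sets l = sets borel" using bl by (auto simp: borel_prob_def)
  have d1: "density l (\<lambda>w. (\<lambda>_. 1) (pXZ w)) = l" by (simp add: density_1)
  have h1: "distr (density (distr l borel pXZ) (\<lambda>_. 1)) borel fst = \<mu>"
    unfolding density_1 distr_distr_borel[OF meas_proj(6) meas_fs(1) sl] proj_comp by (rule lX)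
  have 1: "(\<lambda>_. 1::ennreal) \<in> borel_measurable borel" by simp
  show ?thesis
  proof (rule sym, rule rect_eq)
    show "sets (margXY l) = sets borel" "sets (margXY (density l (\<lambda>w. f (pXZ w)))) = sets borel"
      by (simp_all add: margXY_def)
    have "prob_space (margXY l)" using margXY_Pi2[OF l] by (simp add: Pi2_def borel_prob_def)
    then have "emeasure (margXY l) (space (margXY l)) = 1" by (rule prob_space.emeasure_space_1)
    then show "emeasure (margXY l) UNIV \<noteq> \<infinity>" by (simp add: margXY_def)
    fix a b assume a: "a \<in> sets (borel :: 'x measure)" and b: "b \<in> sets (borel :: 'y measure)"
    have "emeasure (margXY l) (a \<times> b) = (\<integral>\<^sup>+ x. indicator a x * emeasure (\<nu>x x) b \<partial>\<mu>)"
      using rect_XZ[OF mu kn kg pl sl c 1 h1 a b] d1 by (simp add: margXY_def)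
    also have "\<dots> = emeasure (margXY (density l (\<lambda>w. f (pXZ w)))) (a \<times> b)"
      using rect_XZ[OF mu kn kg pl sl c f hf[unfolded margXZ_def] a b] by (simp add: margXY_def)
    finally show "emeasure (margXY l) (a \<times> b) = emeasure (margXY (density l (\<lambda>w. f (pXZ w)))) (a \<times> b)" .
  qed
qed

lemma key_XY:
  fixes \<mu> :: "'x::polish_space measure" and \<nu>x :: "'x \<Rightarrow> 'y::polish_space measure"
    and \<gamma>x :: "'x \<Rightarrow> 'z::polish_space measure" and l :: "('x \<times> 'y \<times> 'z) measure"
  assumes mu: "borel_prob \<mu>" and kn: "prob_kernel \<nu>x" and kg: "prob_kernel \<gamma>x"
    and l: "l \<in> Pi3 \<mu> \<nu> \<gamma>"
    and c: "is_compound l (\<lambda>x. \<nu>x x \<Otimes>\<^sub>M \<gamma>x x) \<mu>"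
    and f: "f \<in> borel_measurable borel"
    and hf: "distr (density (margXY l) f) borel fst = \<mu>"
  shows "margXZ (density l (\<lambda>w. f (pXY w))) = margXZ l"
proof -
  have bl: "borel_prob l" and lX: "distr l borel pX = \<mu>" using l by (auto simp: Pi3_def)
  have pl: "prob_space l" and sl: "sets l = sets borel" using bl by (auto simp: borel_prob_def)
  have d1: "density l (\<lambda>w. (\<lambda>_. 1) (pXY w)) = l" by (simp add: density_1)
  have h1: "distr (density (distr l borel pXY) (\<lambda>_. 1)) borel fst = \<mu>"
    unfolding density_1 distr_distr_borel[OF meas_proj(4) meas_fs(1) sl] proj_comp by (rule lX)
  have 1: "(\<lambda>_. 1::ennreal) \<in> borel_measurable borel" by simp
  show ?thesis
  proof (rule sym, rule rect_eq)
    show "sets (margXZ l) = sets borel" "sets (margXZ (density l (\<lambda>w. f (pXY w)))) = sets borel"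
      by (simp_all add: margXZ_def)
    have "prob_space (margXZ l)" using margXZ_Pi2[OF l] by (simp add: Pi2_def borel_prob_def)
    then have "emeasure (margXZ l) (space (margXZ l)) = 1" by (rule prob_space.emeasure_space_1)
    then show "emeasure (margXZ l) UNIV \<noteq> \<infinity>" by (simp add: margXZ_def)
    fix a b assume a: "a \<in> sets (borel :: 'x measure)" and b: "b \<in> sets (borel :: 'z measure)"
    have "emeasure (margXZ l) (a \<times> b) = (\<integral>\<^sup>+ x. indicator a x * emeasure (\<gamma>x x) b \<partial>\<mu>)"
      using rect_XY[OF mu kn kg pl sl c 1 h1 a b] d1 by (simp add: margXZ_def)
    also have "\<dots> = emeasure (margXZ (density l (\<lambda>w. f (pXY w)))) (a \<times> b)"
      using rect_XY[OF mu kn kg pl sl c f hf[unfolded margXY_def] a b] by (simp add: margXZ_def)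
    finally show "emeasure (margXZ l) (a \<times> b) = emeasure (margXZ (density l (\<lambda>w. f (pXY w)))) (a \<times> b)" .
  qed
qed

lemma partA_XZ:
  fixes \<mu> :: "'x::polish_space measure" and \<nu>x :: "'x \<Rightarrow> 'y::polish_space measure"
    and \<gamma>x :: "'x \<Rightarrow> 'z::polish_space measure" and l :: "('x \<times> 'y \<times> 'z) measure"
  assumes mu: "borel_prob \<mu>" and kn: "prob_kernel \<nu>x" and kg: "prob_kernel \<gamma>x"
    and l: "l \<in> Pi3 \<mu> \<nu> \<gamma>"
    and c: "is_compound l (\<lambda>x. \<nu>x x \<Otimes>\<^sub>M \<gamma>x x) \<mu>"
    and e: "extreme_point l (Pi_XY \<mu> \<nu> \<gamma> l)"
  shows "extreme_point (margXZ l) (Pi2 \<mu> \<gamma>)"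
  unfolding extreme_point_def
proof (intro conjI ballI allI impI)
  show "margXZ l \<in> Pi2 \<mu> \<gamma>" by (rule margXZ_Pi2[OF l])
  fix \<pi>1 \<pi>2 t assume p1: "\<pi>1 \<in> Pi2 \<mu> \<gamma>" and p2: "\<pi>2 \<in> Pi2 \<mu> \<gamma>"
    and H: "0 < t \<and> t < 1 \<and> (\<forall>A\<in>sets (margXZ l). measure (margXZ l) A = t * measure \<pi>1 A + (1 - t) * measure \<pi>2 A)"
  have bl: "borel_prob l" and lX: "distr l borel pX = \<mu>" and lY: "distr l borel pY = \<nu>"
    and lZ: "distr l borel pZ = \<gamma>" using l by (auto simp: Pi3_def)
  have pl: "prob_space l" and sl: "sets l = sets borel" using bl by (auto simp: borel_prob_def)
  have pp1: "prob_space \<pi>1" "sets \<pi>1 = sets borel" "distr \<pi>1 borel fst = \<mu>" "distr \<pi>1 borel snd = \<gamma>"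
    using p1 by (auto simp: Pi2_def borel_prob_def)
  have pp2: "prob_space \<pi>2" "sets \<pi>2 = sets borel" "distr \<pi>2 borel fst = \<mu>" "distr \<pi>2 borel snd = \<gamma>"
    using p2 by (auto simp: Pi2_def borel_prob_def)
  have H': "\<forall>A\<in>sets borel. measure (distr l borel pXZ) A = t * measure \<pi>1 A + (1 - t) * measure \<pi>2 A"
    using H by (simp add: margXZ_def)
  have ql: "pXZ \<in> l \<rightarrow>\<^sub>M borel" using measurable_cong_sets[OF sl refl] meas_proj(6) by blast
  obtain f1 f2 where m1: "f1 \<in> borel_measurable borel" and m2: "f2 \<in> borel_measurable borel"
    and dd1: "distr (density l (\<lambda>w. f1 (pXZ w))) borel pXZ = \<pi>1"
    and dd2: "distr (density l (\<lambda>w. f2 (pXZ w))) borel pXZ = \<pi>2"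
    and pr1: "prob_space (density l (\<lambda>w. f1 (pXZ w)))"
    and pr2: "prob_space (density l (\<lambda>w. f2 (pXZ w)))"
    and conv: "\<forall>A\<in>sets l. measure l A = t * measure (density l (\<lambda>w. f1 (pXZ w))) A
        + (1 - t) * measure (density l (\<lambda>w. f2 (pXZ w))) A"
    using build[OF pl sl meas_proj(6) pp1(1,2) pp2(1,2) _ _ H'] H by blast
  have inPi: "density l (\<lambda>w. f (pXZ w)) \<in> Pi_XY \<mu> \<nu> \<gamma> l"
    and mz: "margXZ (density l (\<lambda>w. f (pXZ w))) = \<pi>"
    if m: "f \<in> borel_measurable borel" and dd: "distr (density l (\<lambda>w. f (pXZ w))) borel pXZ = \<pi>"
      and pr: "prob_space (density l (\<lambda>w. f (pXZ w)))"
      and pf: "distr \<pi> borel fst = \<mu>" "distr \<pi> borel snd = \<gamma>" for f \<pi>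
  proof -
    define \<rho> where "\<rho> = density l (\<lambda>w. f (pXZ w))"
    have s\<rho>: "sets \<rho> = sets borel" unfolding \<rho>_def using sl by simp
    show mz: "margXZ (density l (\<lambda>w. f (pXZ w))) = \<pi>" using dd by (simp add: margXZ_def)
    have hf: "distr (density (margXZ l) f) borel fst = \<mu>"
      unfolding margXZ_def density_distr[OF m ql] dd by (rule pf(1))
    have my: "margXY \<rho> = margXY l" unfolding \<rho>_def by (rule key_XZ[OF mu kn kg l c m hf])
    have "distr \<rho> borel pX = \<mu>"
      using distr_distr_borel[OF meas_proj(6) meas_fs(1) s\<rho>] dd pf(1) by (simp add: \<rho>_def proj_comp)
    moreover have "distr \<rho> borel pZ = \<gamma>"
      using distr_distr_borel[OF meas_proj(6) meas_fs(2) s\<rho>] dd pf(2) by (simp add: \<rho>_def proj_comp)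
    moreover have "distr \<rho> borel pY = \<nu>"
    proof -
      have "distr \<rho> borel pY = distr (margXY \<rho>) borel snd"
        using distr_distr_borel[OF meas_proj(4) meas_fs(2) s\<rho>] by (simp add: margXY_def proj_comp)
      also have "\<dots> = distr (margXY l) borel snd" by (simp only: my)
      also have "\<dots> = distr l borel pY"
        using distr_distr_borel[OF meas_proj(4) meas_fs(2) sl] by (simp add: margXY_def proj_comp)
      finally show ?thesis using lY by simp
    qed
    moreover have "borel_prob \<rho>" using s\<rho> pr unfolding borel_prob_def \<rho>_def by simp
    ultimately show "density l (\<lambda>w. f (pXZ w)) \<in> Pi_XY \<mu> \<nu> \<gamma> l"
      using my unfolding Pi_XY_def Pi3_def \<rho>_def by simp
  qed
  have "density l (\<lambda>w. f1 (pXZ w)) = density l (\<lambda>w. f2 (pXZ w))"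
    using e inPi[OF m1 dd1 pr1 pp1(3,4)] inPi[OF m2 dd2 pr2 pp2(3,4)] H conv
    unfolding extreme_point_def by blast
  then show "\<pi>1 = \<pi>2" using dd1 dd2 by simp
qed


lemma partA_XY:
  fixes \<mu> :: "'x::polish_space measure" and \<nu>x :: "'x \<Rightarrow> 'y::polish_space measure"
    and \<gamma>x :: "'x \<Rightarrow> 'z::polish_space measure" and l :: "('x \<times> 'y \<times> 'z) measure"
  assumes mu: "borel_prob \<mu>" and kn: "prob_kernel \<nu>x" and kg: "prob_kernel \<gamma>x"
    and l: "l \<in> Pi3 \<mu> \<nu> \<gamma>"
    and c: "is_compound l (\<lambda>x. \<nu>x x \<Otimes>\<^sub>M \<gamma>x x) \<mu>"
    and e: "extreme_point l (Pi_XZ \<mu> \<nu> \<gamma> l)"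
  shows "extreme_point (margXY l) (Pi2 \<mu> \<nu>)"
  unfolding extreme_point_def
proof (intro conjI ballI allI impI)
  show "margXY l \<in> Pi2 \<mu> \<nu>" by (rule margXY_Pi2[OF l])
  fix \<pi>1 \<pi>2 t assume p1: "\<pi>1 \<in> Pi2 \<mu> \<nu>" and p2: "\<pi>2 \<in> Pi2 \<mu> \<nu>"
    and H: "0 < t \<and> t < 1 \<and> (\<forall>A\<in>sets (margXY l). measure (margXY l) A = t * measure \<pi>1 A + (1 - t) * measure \<pi>2 A)"
  have bl: "borel_prob l" and lX: "distr l borel pX = \<mu>" and lY: "distr l borel pY = \<nu>"
    and lZ: "distr l borel pZ = \<gamma>" using l by (auto simp: Pi3_def)
  have pl: "prob_space l" and sl: "sets l = sets borel" using bl by (auto simp: borel_prob_def)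
  have pp1: "prob_space \<pi>1" "sets \<pi>1 = sets borel" "distr \<pi>1 borel fst = \<mu>" "distr \<pi>1 borel snd = \<nu>"
    using p1 by (auto simp: Pi2_def borel_prob_def)
  have pp2: "prob_space \<pi>2" "sets \<pi>2 = sets borel" "distr \<pi>2 borel fst = \<mu>" "distr \<pi>2 borel snd = \<nu>"
    using p2 by (auto simp: Pi2_def borel_prob_def)
  have H': "\<forall>A\<in>sets borel. measure (distr l borel pXY) A = t * measure \<pi>1 A + (1 - t) * measure \<pi>2 A"
    using H by (simp add: margXY_def)
  have ql: "pXY \<in> l \<rightarrow>\<^sub>M borel" using measurable_cong_sets[OF sl refl] meas_proj(4) by blast
  obtain f1 f2 where m1: "f1 \<in> borel_measurable borel" and m2: "f2 \<in> borel_measurable borel"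
    and dd1: "distr (density l (\<lambda>w. f1 (pXY w))) borel pXY = \<pi>1"
    and dd2: "distr (density l (\<lambda>w. f2 (pXY w))) borel pXY = \<pi>2"
    and pr1: "prob_space (density l (\<lambda>w. f1 (pXY w)))"
    and pr2: "prob_space (density l (\<lambda>w. f2 (pXY w)))"
    and conv: "\<forall>A\<in>sets l. measure l A = t * measure (density l (\<lambda>w. f1 (pXY w))) A
        + (1 - t) * measure (density l (\<lambda>w. f2 (pXY w))) A"
    using build[OF pl sl meas_proj(4) pp1(1,2) pp2(1,2) _ _ H'] H by blast
  have inPi: "density l (\<lambda>w. f (pXY w)) \<in> Pi_XZ \<mu> \<nu> \<gamma> l"
    and mz: "margXY (density l (\<lambda>w. f (pXY w))) = \<pi>"
    if m: "f \<in> borel_measurable borel" and dd: "distr (density l (\<lambda>w. f (pXY w))) borel pXY = \<pi>"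
      and pr: "prob_space (density l (\<lambda>w. f (pXY w)))"
      and pf: "distr \<pi> borel fst = \<mu>" "distr \<pi> borel snd = \<nu>" for f \<pi>
  proof -
    define \<rho> where "\<rho> = density l (\<lambda>w. f (pXY w))"
    have s\<rho>: "sets \<rho> = sets borel" unfolding \<rho>_def using sl by simp
    show mz: "margXY (density l (\<lambda>w. f (pXY w))) = \<pi>" using dd by (simp add: margXY_def)
    have hf: "distr (density (margXY l) f) borel fst = \<mu>"
      unfolding margXY_def density_distr[OF m ql] dd by (rule pf(1))
    have my: "margXZ \<rho> = margXZ l" unfolding \<rho>_def by (rule key_XY[OF mu kn kg l c m hf])
    have "distr \<rho> borel pX = \<mu>"
      using distr_distr_borel[OF meas_proj(4) meas_fs(1) s\<rho>] dd pf(1) by (simp add: \<rho>_def proj_comp)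
    moreover have "distr \<rho> borel pY = \<nu>"
      using distr_distr_borel[OF meas_proj(4) meas_fs(2) s\<rho>] dd pf(2) by (simp add: \<rho>_def proj_comp)
    moreover have "distr \<rho> borel pZ = \<gamma>"
    proof -
      have "distr \<rho> borel pZ = distr (margXZ \<rho>) borel snd"
        using distr_distr_borel[OF meas_proj(6) meas_fs(2) s\<rho>] by (simp add: margXZ_def proj_comp)
      also have "\<dots> = distr (margXZ l) borel snd" by (simp only: my)
      also have "\<dots> = distr l borel pZ"
        using distr_distr_borel[OF meas_proj(6) meas_fs(2) sl] by (simp add: margXZ_def proj_comp)
      finally show ?thesis using lZ by simp
    qed
    moreover have "borel_prob \<rho>" using s\<rho> pr unfolding borel_prob_def \<rho>_def by simp
    ultimately show "density l (\<lambda>w. f (pXY w)) \<in> Pi_XZ \<mu> \<nu> \<gamma> l"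
      using my unfolding Pi_XZ_def Pi3_def \<rho>_def by simp
  qed
  have "density l (\<lambda>w. f1 (pXY w)) = density l (\<lambda>w. f2 (pXY w))"
    using e inPi[OF m1 dd1 pr1 pp1(3,4)] inPi[OF m2 dd2 pr2 pp2(3,4)] H conv
    unfolding extreme_point_def by blast
  then show "\<pi>1 = \<pi>2" using dd1 dd2 by simp
qed

theorem mainTheorem13:
  fixes \<mu> :: "'x::polish_space measure" and \<nu> :: "'y::polish_space measure"
    and \<gamma> :: "'z::polish_space measure" and l :: "('x \<times> 'y \<times> 'z) measure"
  assumes "borel_prob \<mu>" and "borel_prob \<nu>" and "borel_prob \<gamma>"
    and "l \<in> Pi3 \<mu> \<nu> \<gamma>"
  shows "(extreme_point l (Pi3 \<mu> \<nu> \<gamma>) \<longrightarrow>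
            extreme_point l (Pi_XY \<mu> \<nu> \<gamma> l) \<and> extreme_point l (Pi_YZ \<mu> \<nu> \<gamma> l)
            \<and> extreme_point l (Pi_XZ \<mu> \<nu> \<gamma> l))
       \<and> (extreme_point l (Pi_XY \<mu> \<nu> \<gamma> l) \<and> extreme_point (margXY l) (Pi2 \<mu> \<nu>) \<longrightarrow>
            extreme_point l (Pi3 \<mu> \<nu> \<gamma>))
       \<and> (\<forall>(\<nu>x :: 'x \<Rightarrow> 'y measure) (\<gamma>x :: 'x \<Rightarrow> 'z measure).
            prob_kernel \<nu>x \<and> prob_kernel \<gamma>x
            \<and> is_compound l (\<lambda>x. \<nu>x x \<Otimes>\<^sub>M \<gamma>x x) \<mu>
            \<and> is_compound (margXY l) \<nu>x \<mu> \<and> is_compound (margXZ l) \<gamma>x \<mu> \<longrightarrow>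
              (extreme_point l (Pi_XY \<mu> \<nu> \<gamma> l) \<longrightarrow> extreme_point (margXZ l) (Pi2 \<mu> \<gamma>))
            \<and> (extreme_point l (Pi_XY \<mu> \<nu> \<gamma> l) \<and> extreme_point l (Pi_XZ \<mu> \<nu> \<gamma> l) \<longrightarrow>
                 extreme_point l (Pi3 \<mu> \<nu> \<gamma>)))"
proof -
  have A: "extreme_point l (Pi3 \<mu> \<nu> \<gamma>) \<longrightarrow>
            extreme_point l (Pi_XY \<mu> \<nu> \<gamma> l) \<and> extreme_point l (Pi_YZ \<mu> \<nu> \<gamma> l)
            \<and> extreme_point l (Pi_XZ \<mu> \<nu> \<gamma> l)"
  proof
    assume e: "extreme_point l (Pi3 \<mu> \<nu> \<gamma>)"
    show "extreme_point l (Pi_XY \<mu> \<nu> \<gamma> l) \<and> extreme_point l (Pi_YZ \<mu> \<nu> \<gamma> l)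
            \<and> extreme_point l (Pi_XZ \<mu> \<nu> \<gamma> l)"
      using part1[OF e, of "Pi_XY \<mu> \<nu> \<gamma> l"] part1[OF e, of "Pi_YZ \<mu> \<nu> \<gamma> l"]
        part1[OF e, of "Pi_XZ \<mu> \<nu> \<gamma> l"] assms(4)
      unfolding Pi_XY_def Pi_YZ_def Pi_XZ_def by blast
  qed
  have B: "extreme_point l (Pi_XY \<mu> \<nu> \<gamma> l) \<and> extreme_point (margXY l) (Pi2 \<mu> \<nu>) \<longrightarrow>
            extreme_point l (Pi3 \<mu> \<nu> \<gamma>)"
    using part2[OF assms(4)] by blast
  have C: "\<forall>(\<nu>x :: 'x \<Rightarrow> 'y measure) (\<gamma>x :: 'x \<Rightarrow> 'z measure).
            prob_kernel \<nu>x \<and> prob_kernel \<gamma>x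
            \<and> is_compound l (\<lambda>x. \<nu>x x \<Otimes>\<^sub>M \<gamma>x x) \<mu>
            \<and> is_compound (margXY l) \<nu>x \<mu> \<and> is_compound (margXZ l) \<gamma>x \<mu> \<longrightarrow>
              (extreme_point l (Pi_XY \<mu> \<nu> \<gamma> l) \<longrightarrow> extreme_point (margXZ l) (Pi2 \<mu> \<gamma>))
            \<and> (extreme_point l (Pi_XY \<mu> \<nu> \<gamma> l) \<and> extreme_point l (Pi_XZ \<mu> \<nu> \<gamma> l) \<longrightarrow>
                 extreme_point l (Pi3 \<mu> \<nu> \<gamma>))"
  proof (intro allI impI)
    fix \<nu>x :: "'x \<Rightarrow> 'y measure" and \<gamma>x :: "'x \<Rightarrow> 'z measure"
    assume h: "prob_kernel \<nu>x \<and> prob_kernel \<gamma>x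
            \<and> is_compound l (\<lambda>x. \<nu>x x \<Otimes>\<^sub>M \<gamma>x x) \<mu>
            \<and> is_compound (margXY l) \<nu>x \<mu> \<and> is_compound (margXZ l) \<gamma>x \<mu>"
    then have kn: "prob_kernel \<nu>x" and kg: "prob_kernel \<gamma>x"
      and c: "is_compound l (\<lambda>x. \<nu>x x \<Otimes>\<^sub>M \<gamma>x x) \<mu>" by auto
    show "(extreme_point l (Pi_XY \<mu> \<nu> \<gamma> l) \<longrightarrow> extreme_point (margXZ l) (Pi2 \<mu> \<gamma>))
            \<and> (extreme_point l (Pi_XY \<mu> \<nu> \<gamma> l) \<and> extreme_point l (Pi_XZ \<mu> \<nu> \<gamma> l) \<longrightarrow>
                 extreme_point l (Pi3 \<mu> \<nu> \<gamma>))"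
      using partA_XZ[OF assms(1) kn kg assms(4) c] partA_XY[OF assms(1) kn kg assms(4) c]
        part2[OF assms(4)] by blast
  qed
  show ?thesis using A B C by blast
qed

end
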